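(* Let $X$ be a binary random variable taking values in $\{x_1,x_2\}\subset\mathbb{R}$ with $\mathbb{E}[X]=0$, let $U$ be a random variable on a finite alphabet $\mathcal{U}$ jointly distributed with $X$, and let $\epsilon\ge0$ be such that $\|P_{X|U=u}-P_X\|_1\le\epsilon$ for all $u\in\mathcal{U}$. Then $\mathrm{MMSE}(X|U)\ge\mathrm{Var}(X)-\frac14\epsilon^2(x_1-x_2)^2$. Furthermore, $\mathrm{Var}(X)\le\frac14(x_1-x_2)^2$, and if $x_1=-x_2$ then $\mathrm{Var}(X)=\frac14(x_1-x_2)^2$.
   Context: $\mathrm{MMSE}(X|U)=\sum_u P_U(u)\left(\mathbb{E}(X^2|U=u)-(\mathbb{E}(X|U=u))^2\right)$. $\|\cdot\|_1$ is the $\ell_1$ norm. *)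

theory Defs
  imports "HOL-Probability.Probability"
begin

definition marg_U :: "('u \<times> real) pmf \<Rightarrow> 'u pmf" where
  "marg_U J = map_pmf fst J"

definition marg_X :: "('u \<times> real) pmf \<Rightarrow> real pmf" where
  "marg_X J = map_pmf snd J"

text \<open>Conditional distribution of X given U = u (meaningful when P_U(u) > 0).\<close>
definition cond_X :: "('u \<times> real) pmf \<Rightarrow> 'u \<Rightarrow> real pmf" where
  "cond_X J u = map_pmf snd (cond_pmf J {p. fst p = u})"

definition l1_dist :: "'a pmf \<Rightarrow> 'a pmf \<Rightarrow> real" where
  "l1_dist p q = (\<Sum>x\<in>set_pmf p \<union> set_pmf q. \<bar>pmf p x - pmf q x\<bar>)"

definition MMSE :: "('u::finite \<times> real) pmf \<Rightarrow> real" where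
  "MMSE J = (\<Sum>u\<in>UNIV. pmf (marg_U J) u *
      (measure_pmf.expectation (cond_X J u) (\<lambda>x. x\<^sup>2)
       - (measure_pmf.expectation (cond_X J u) (\<lambda>x. x))\<^sup>2))"

end

theory Submission
  imports Defs
begin

lemma exp_sum:
  fixes p :: "real pmf" and A :: "real set"
  assumes "finite A" "set_pmf p \<subseteq> A"
  shows "measure_pmf.expectation p f = (\<Sum>x\<in>A. f x * pmf p x)"
  using assms by (intro integral_measure_pmf_real) auto

lemma l1_bound:
  fixes p q :: "real pmf" and x1 x2 :: real
  assumes p: "set_pmf p \<subseteq> {x1,x2}" and q: "set_pmf q \<subseteq> {x1,x2}"
  shows "\<bar>measure_pmf.expectation q (\<lambda>x. x) - measure_pmf.expectation p (\<lambda>x. x)\<bar>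
          \<le> l1_dist q p * (\<bar>x1 - x2\<bar> / 2)"
proof -
  define A where "A = {x1,x2}"
  define c where "c = (x1 + x2) / 2"
  have fin: "finite A" by (simp add: A_def)
  have s1: "(\<Sum>x\<in>A. pmf p x) = 1" using sum_pmf_eq_1[OF fin] p A_def by auto
  have s2: "(\<Sum>x\<in>A. pmf q x) = 1" using sum_pmf_eq_1[OF fin] q A_def by auto
  have "measure_pmf.expectation q (\<lambda>x. x) - measure_pmf.expectation p (\<lambda>x. x)
      = (\<Sum>x\<in>A. x * (pmf q x - pmf p x))"
    using exp_sum[OF fin, of q] exp_sum[OF fin, of p] p q A_def
    by (simp add: sum_subtractf[symmetric] algebra_simps)
  also have "\<dots> = (\<Sum>x\<in>A. (x - c) * (pmf q x - pmf p x)) + c * ((\<Sum>x\<in>A. pmf q x) - (\<Sum>x\<in>A. pmf p x))"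
    by (simp add: sum_distrib_left sum_subtractf[symmetric] sum.distrib[symmetric] algebra_simps)
  also have "\<dots> = (\<Sum>x\<in>A. (x - c) * (pmf q x - pmf p x))" using s1 s2 by simp
  finally have eq: "measure_pmf.expectation q (\<lambda>x. x) - measure_pmf.expectation p (\<lambda>x. x)
      = (\<Sum>x\<in>A. (x - c) * (pmf q x - pmf p x))" .
  have "\<bar>\<Sum>x\<in>A. (x - c) * (pmf q x - pmf p x)\<bar> \<le> (\<Sum>x\<in>A. \<bar>(x - c) * (pmf q x - pmf p x)\<bar>)"
    by (rule sum_abs)
  also have "\<dots> = (\<Sum>x\<in>A. (\<bar>x1 - x2\<bar> / 2) * \<bar>pmf q x - pmf p x\<bar>)"
  proof (intro sum.cong refl)
    fix x assume "x \<in> A"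
    then have "x = x1 \<or> x = x2" by (simp add: A_def)
    then have "\<bar>x - c\<bar> = \<bar>x1 - x2\<bar> / 2" 
    proof -
      have e1: "x1 - (x1+x2)/2 = (x1-x2)/2" and e2: "x2 - (x1+x2)/2 = -((x1-x2)/2)" by (simp_all add: field_simps)
      show ?thesis using \<open>x = x1 \<or> x = x2\<close> unfolding c_def by (auto simp only: e1 e2 abs_minus_cancel abs_divide)
    qed
    then show "\<bar>(x - c) * (pmf q x - pmf p x)\<bar> = (\<bar>x1 - x2\<bar> / 2) * \<bar>pmf q x - pmf p x\<bar>"
      by (simp add: abs_mult)
  qed
  also have "\<dots> = (\<bar>x1 - x2\<bar> / 2) * (\<Sum>x\<in>A. \<bar>pmf q x - pmf p x\<bar>)"
    by (simp add: sum_distrib_left)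
  also have "(\<Sum>x\<in>A. \<bar>pmf q x - pmf p x\<bar>) = l1_dist q p"
    unfolding l1_dist_def
    by (rule sum.mono_neutral_right) (use p q A_def fin in \<open>auto simp: set_pmf_iff\<close>)
  finally show ?thesis using eq by (simp add: mult.commute)
qed

theorem proposition9:
  fixes J :: "('u::finite \<times> real) pmf" and x1 x2 \<epsilon> :: real
  assumes binary: "set_pmf (marg_X J) \<subseteq> {x1, x2}"
    and mean0: "measure_pmf.expectation (marg_X J) (\<lambda>x. x) = 0"
    and eps: "\<epsilon> \<ge> 0"
    and close: "\<And>u. u \<in> set_pmf (marg_U J) \<Longrightarrow> l1_dist (cond_X J u) (marg_X J) \<le> \<epsilon>"
  shows "MMSE J \<ge> measure_pmf.variance (marg_X J) (\<lambda>x. x) - 1/4 * \<epsilon>\<^sup>2 * (x1 - x2)\<^sup>2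
      \<and> measure_pmf.variance (marg_X J) (\<lambda>x. x) \<le> 1/4 * (x1 - x2)\<^sup>2
      \<and> (x1 = - x2 \<longrightarrow> measure_pmf.variance (marg_X J) (\<lambda>x. x) = 1/4 * (x1 - x2)\<^sup>2)"
proof -
  define A where "A = {x1,x2}"
  define P where "P = marg_X J"
  define c where "c = (x1 + x2) / 2"
  have fin: "finite A" by (simp add: A_def)
  have PA: "set_pmf P \<subseteq> A" using binary by (simp add: P_def A_def)
  have var: "measure_pmf.variance P (\<lambda>x. x) = (\<Sum>x\<in>A. x\<^sup>2 * pmf P x)"
    using mean0 exp_sum[OF fin PA] by (simp add: P_def)
  have s1: "(\<Sum>x\<in>A. pmf P x) = 1" using sum_pmf_eq_1[OF fin PA] .
  have m0: "(\<Sum>x\<in>A. x * pmf P x) = 0" using mean0 exp_sum[OF fin PA] by (simp add: P_def)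
  have cc: "(\<Sum>x\<in>A. pmf P x * c\<^sup>2) = c\<^sup>2" by (metis s1 sum_distrib_right mult_1)
  have "(\<Sum>x\<in>A. (x - c)\<^sup>2 * pmf P x) = (\<Sum>x\<in>A. x\<^sup>2 * pmf P x) - 2 * c * (\<Sum>x\<in>A. x * pmf P x) + c\<^sup>2 * (\<Sum>x\<in>A. pmf P x)"
    by (simp add: power2_diff algebra_simps sum_distrib_left sum_subtractf sum.distrib sum_distrib_right)
  also have "\<dots> = measure_pmf.variance P (\<lambda>x. x) + c\<^sup>2" using var m0 s1 cc by simp
  finally have e1: "(\<Sum>x\<in>A. (x - c)\<^sup>2 * pmf P x) = measure_pmf.variance P (\<lambda>x. x) + c\<^sup>2" .
  have "(\<Sum>x\<in>A. (x - c)\<^sup>2 * pmf P x) = (\<Sum>x\<in>A. 1/4 * (x1 - x2)\<^sup>2 * pmf P x)"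
    by (intro sum.cong) (auto simp: A_def c_def power2_eq_square field_simps)
  also have "\<dots> = 1/4 * (x1 - x2)\<^sup>2" by (metis s1 sum_distrib_left mult_1_right)
  finally have e2: "measure_pmf.variance P (\<lambda>x. x) + c\<^sup>2 = 1/4 * (x1 - x2)\<^sup>2" using e1 by simp
  have part2: "measure_pmf.variance P (\<lambda>x. x) \<le> 1/4 * (x1 - x2)\<^sup>2"
    using e2 by (smt (verit) zero_le_power2)
  have part3: "x1 = - x2 \<longrightarrow> measure_pmf.variance P (\<lambda>x. x) = 1/4 * (x1 - x2)\<^sup>2"
  proof
    assume "x1 = - x2"
    then have "c = 0" by (simp add: c_def)
    then show "measure_pmf.variance P (\<lambda>x. x) = 1/4 * (x1 - x2)\<^sup>2" using e2 by simp
  qed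
  define S where "S = (\<lambda>u::'u. {p::'u \<times> real. fst p = u})"
  define Pu where "Pu = (\<lambda>u. pmf (marg_U J) u)"
  have JA: "set_pmf J \<subseteq> UNIV \<times> A"
  proof
    fix a assume "a \<in> set_pmf J"
    then have "snd a \<in> set_pmf P" by (simp add: P_def marg_X_def)
    then show "a \<in> UNIV \<times> A" using PA by (cases a) auto
  qed
  have Pu_meas: "Pu u = measure J (S u)" for u
    by (simp add: Pu_def marg_U_def pmf_map S_def vimage_def)
  have Pu_sum: "Pu u = (\<Sum>x\<in>A. pmf J (u, x))" for u
  proof -
    have "S u \<inter> set_pmf J = ({u} \<times> A) \<inter> set_pmf J" using JA by (auto simp: S_def)
    then have "measure J (S u) = measure J ({u} \<times> A)"
      by (metis measure_Int_set_pmf)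
    also have "\<dots> = (\<Sum>a\<in>{u} \<times> A. pmf J a)" using fin by (simp add: measure_measure_pmf_finite)
    also have "\<dots> = (\<Sum>x\<in>A. pmf J (u, x))"
      by (simp add: sum.cartesian_product')
    finally show ?thesis using Pu_meas by simp
  qed
  have T: "Pu u * measure_pmf.expectation (cond_X J u) f = (\<Sum>x\<in>A. f x * pmf J (u, x))" for u f
  proof (cases "Pu u = 0")
    case True
    then have "\<forall>x\<in>A. pmf J (u, x) = 0" using Pu_sum[of u] fin by (simp add: sum_nonneg_eq_0_iff)
    then show ?thesis using True by simp
  next
    case False
    have ne: "set_pmf J \<inter> S u \<noteq> {}"
    proof
      assume "set_pmf J \<inter> S u = {}"
      then have "measure J (S u \<inter> set_pmf J) = 0" by (simp add: Int_commute)
      then show False using False Pu_meas by (simp add: measure_Int_set_pmf)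
    qed
    have "measure_pmf.expectation (cond_X J u) f = measure_pmf.expectation (cond_pmf J (S u)) (\<lambda>a. f (snd a))"
      by (simp add: cond_X_def S_def)
    also have "\<dots> = (\<Sum>a\<in>{u} \<times> A. f (snd a) * pmf (cond_pmf J (S u)) a)"
      using fin JA set_cond_pmf[OF ne] by (intro integral_measure_pmf_real) (auto simp: S_def)
    also have "\<dots> = (\<Sum>x\<in>A. f x * (pmf J (u, x) / Pu u))"
      using pmf_cond[OF ne] Pu_meas by (simp add: sum.cartesian_product' S_def)
    finally show ?thesis using False by (simp add: sum_distrib_left field_simps)
  qed
  have EP: "measure_pmf.expectation P f = (\<Sum>u\<in>UNIV. \<Sum>x\<in>A. f x * pmf J (u, x))" for f
  proof -
    have "measure_pmf.expectation P f = measure_pmf.expectation J (\<lambda>a. f (snd a))"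
      by (simp add: P_def marg_X_def)
    also have "\<dots> = (\<Sum>a\<in>UNIV \<times> A. f (snd a) * pmf J a)"
      using fin JA by (intro integral_measure_pmf_real) auto
    also have "\<dots> = (\<Sum>u\<in>UNIV. \<Sum>x\<in>A. f x * pmf J (u, x))"
      by (simp add: sum.cartesian_product')
    finally show ?thesis .
  qed
  have tot: "(\<Sum>u\<in>UNIV. Pu u * measure_pmf.expectation (cond_X J u) f) = measure_pmf.expectation P f" for f
    using T EP by simp
  define B where "B = (\<epsilon> * (\<bar>x1 - x2\<bar> / 2))\<^sup>2"
  have mb: "Pu u * (measure_pmf.expectation (cond_X J u) (\<lambda>x. x))\<^sup>2 \<le> Pu u * B" for u
  proof (cases "Pu u = 0")
    case True then show ?thesis by simp
  next
    case False
    then have u: "u \<in> set_pmf (marg_U J)" by (simp add: Pu_def set_pmf_iff)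
    have ne: "set_pmf J \<inter> S u \<noteq> {}"
      using u by (auto simp: marg_U_def S_def)
    have cA: "set_pmf (cond_X J u) \<subseteq> {x1, x2}"
      using JA set_cond_pmf[OF ne] by (auto simp: cond_X_def S_def A_def)
    have "\<bar>measure_pmf.expectation (cond_X J u) (\<lambda>x. x)\<bar> \<le> l1_dist (cond_X J u) P * (\<bar>x1 - x2\<bar> / 2)"
      using l1_bound[OF binary cA] mean0 by (simp add: P_def)
    also have "\<dots> \<le> \<epsilon> * (\<bar>x1 - x2\<bar> / 2)"
      using close[OF u] by (intro mult_right_mono) (auto simp: P_def)
    finally have "(measure_pmf.expectation (cond_X J u) (\<lambda>x. x))\<^sup>2 \<le> B"
      unfolding B_def by (metis abs_ge_zero power2_abs power_mono)
    then show ?thesis by (intro mult_left_mono) (auto simp: Pu_def)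
  qed
  have sPu: "(\<Sum>u\<in>UNIV. Pu u) = 1" unfolding Pu_def by (rule sum_pmf_eq_1) auto
  have "MMSE J = (\<Sum>u\<in>UNIV. Pu u * measure_pmf.expectation (cond_X J u) (\<lambda>x. x\<^sup>2))
       - (\<Sum>u\<in>UNIV. Pu u * (measure_pmf.expectation (cond_X J u) (\<lambda>x. x))\<^sup>2)"
    unfolding MMSE_def Pu_def by (simp add: right_diff_distrib sum_subtractf)
  also have "(\<Sum>u\<in>UNIV. Pu u * measure_pmf.expectation (cond_X J u) (\<lambda>x. x\<^sup>2)) = measure_pmf.variance P (\<lambda>x. x)"
    using tot[of "\<lambda>x. x\<^sup>2"] mean0 by (simp add: P_def)
  finally have "MMSE J \<ge> measure_pmf.variance P (\<lambda>x. x) - (\<Sum>u\<in>UNIV. Pu u * B)"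
    using sum_mono[of UNIV "\<lambda>u. Pu u * (measure_pmf.expectation (cond_X J u) (\<lambda>x. x))\<^sup>2" "\<lambda>u. Pu u * B", OF mb] by simp
  also have "(\<Sum>u\<in>UNIV. Pu u * B) = 1/4 * \<epsilon>\<^sup>2 * (x1 - x2)\<^sup>2"
  proof -
    have "(\<Sum>u\<in>UNIV. Pu u * B) = B" by (metis sPu sum_distrib_right mult_1)
    then show ?thesis by (simp add: B_def power_mult_distrib power_divide)
  qed
  finally show ?thesis using part2 part3 by (simp add: P_def)
qed

end
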